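(* Let $s,\Delta_s$ be positive integers and $G$ an undirected graph. There exists an $(s,\Delta_s)$-dissolution for $G$ if and only if there exists a $(\Delta_s,s)$-dissolution for $G$.
   Context: For $V'\subseteq V(G)$ let $Z(V',G):=\{(x,y)\mid x\in V',\ y\in V(G)\setminus V',\ \{x,y\}\in E(G)\}$. For positive integers $s,\Delta_s$, an $(s,\Delta_s)$-dissolution for $G$ is a pair $(D,z)$ with $D\subset V(G)$ and $z\colon Z(D,G)\to\{0,\dots,s\}$ such that (a) each $v'\in D$ satisfies $\sum_{(v',v)\in Z(D,G)} z(v',v)=s$, and (b) each $v\in V(G)\setminus D$ satisfies $\sum_{(v',v)\in Z(D,G)} z(v',v)=\Delta_s$. *)

theory Defs
  imports Main
begin

definition graph :: "'a set \<Rightarrow> ('a \<Rightarrow> 'a \<Rightarrow> bool) \<Rightarrow> bool" where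
  "graph V E \<longleftrightarrow> finite V \<and> (\<forall>x y. E x y \<longrightarrow> x \<in> V \<and> y \<in> V) \<and>
     (\<forall>x y. E x y \<longrightarrow> E y x) \<and> (\<forall>x. \<not> E x x)"

definition Zset :: "'a set \<Rightarrow> 'a set \<Rightarrow> ('a \<Rightarrow> 'a \<Rightarrow> bool) \<Rightarrow> ('a \<times> 'a) set" where
  "Zset V' V E = {(x, y). x \<in> V' \<and> y \<in> V - V' \<and> E x y}"

text \<open>An (s, d)-dissolution (D, z); z is only relevant on Z(D,G), where its values lie in {0..s}.\<close>

definition is_dissolution ::
  "nat \<Rightarrow> nat \<Rightarrow> 'a set \<Rightarrow> ('a \<Rightarrow> 'a \<Rightarrow> bool) \<Rightarrow> 'a set \<Rightarrow> ('a \<times> 'a \<Rightarrow> nat) \<Rightarrow> bool" where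
  "is_dissolution s d V E D z \<longleftrightarrow>
     D \<subset> V \<and>
     (\<forall>p \<in> Zset D V E. z p \<le> s) \<and>
     (\<forall>v' \<in> D. (\<Sum>p \<in> {p \<in> Zset D V E. fst p = v'}. z p) = s) \<and>
     (\<forall>v \<in> V - D. (\<Sum>p \<in> {p \<in> Zset D V E. snd p = v}. z p) = d)"

definition has_dissolution :: "nat \<Rightarrow> nat \<Rightarrow> 'a set \<Rightarrow> ('a \<Rightarrow> 'a \<Rightarrow> bool) \<Rightarrow> bool" where
  "has_dissolution s d V E \<longleftrightarrow> (\<exists>D z. is_dissolution s d V E D z)"

end

theory Submission
  imports Defs
begin

lemma Zswap:
  assumes "graph V E" "D \<subseteq> V"
  shows "Zset (V - D) V E = prod.swap ` Zset D V E"
  using assms unfolding graph_def Zset_def by (auto simp: image_iff)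

lemma diss_swap:
  assumes g: "graph V E" and d: "0 < d" and dis: "is_dissolution s d V E D z"
  shows "is_dissolution d s V E (V - D) (z \<circ> prod.swap)"
proof -
  have DV: "D \<subset> V" and le: "\<forall>p \<in> Zset D V E. z p \<le> s"
    and S: "\<forall>v' \<in> D. (\<Sum>p \<in> {p \<in> Zset D V E. fst p = v'}. z p) = s"
    and T: "\<forall>v \<in> V - D. (\<Sum>p \<in> {p \<in> Zset D V E. snd p = v}. z p) = d"
    using dis unfolding is_dissolution_def by auto
  have fin: "finite (Zset D V E)"
  proof -
    have "Zset D V E \<subseteq> V \<times> V" using g unfolding graph_def Zset_def by auto
    moreover have "finite V" using g unfolding graph_def by auto
    ultimately show ?thesis by (meson finite_SigmaI finite_subset)
  qed
  have Dne: "D \<noteq> {}"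
  proof
    assume "D = {}"
    with DV obtain v where "v \<in> V - D" by auto
    with T have "(\<Sum>p \<in> {p \<in> Zset D V E. snd p = v}. z p) = d" by auto
    moreover have "Zset D V E = {}" using \<open>D = {}\<close> unfolding Zset_def by auto
    ultimately show False using d by simp
  qed
  have Z': "Zset (V - D) V E = prod.swap ` Zset D V E" using Zswap[OF g] DV by auto
  have inj: "inj_on prod.swap A" for A :: "('a\<times>'a) set" by (meson inj_on_subset inj_swap subset_UNIV)
  have sub1: "{p \<in> prod.swap ` Zset D V E. fst p = v} = prod.swap ` {p \<in> Zset D V E. snd p = v}" for v
    by auto
  have sub2: "{p \<in> prod.swap ` Zset D V E. snd p = v} = prod.swap ` {p \<in> Zset D V E. fst p = v}" for v
    by auto
  have "V - D \<subset> V" using DV Dne by auto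
  moreover have "\<forall>p \<in> Zset (V - D) V E. (z \<circ> prod.swap) p \<le> d"
  proof
    fix p assume "p \<in> Zset (V - D) V E"
    then obtain q where q: "q \<in> Zset D V E" "p = prod.swap q" using Z' by auto
    hence sv: "snd q \<in> V - D" unfolding Zset_def by auto
    have "z q \<le> (\<Sum>p \<in> {p \<in> Zset D V E. snd p = snd q}. z p)"
      by (rule member_le_sum) (use q fin in auto)
    with T sv q show "(z \<circ> prod.swap) p \<le> d" by simp
  qed
  moreover have "\<forall>v' \<in> V - D. (\<Sum>p \<in> {p \<in> Zset (V - D) V E. fst p = v'}. (z \<circ> prod.swap) p) = d"
  proof
    fix v assume v: "v \<in> V - D"
    have "(\<Sum>p \<in> {p \<in> Zset (V - D) V E. fst p = v}. (z \<circ> prod.swap) p)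
        = (\<Sum>p \<in> prod.swap ` {p \<in> Zset D V E. snd p = v}. (z \<circ> prod.swap) p)"
      by (simp add: Z' sub1)
    also have "\<dots> = (\<Sum>p \<in> {p \<in> Zset D V E. snd p = v}. z p)"
      by (subst sum.reindex[OF inj]) simp
    finally show "(\<Sum>p \<in> {p \<in> Zset (V - D) V E. fst p = v}. (z \<circ> prod.swap) p) = d"
      using T v by simp
  qed
  moreover have "\<forall>v \<in> V - (V - D). (\<Sum>p \<in> {p \<in> Zset (V - D) V E. snd p = v}. (z \<circ> prod.swap) p) = s"
  proof
    fix v assume v: "v \<in> V - (V - D)"
    have "(\<Sum>p \<in> {p \<in> Zset (V - D) V E. snd p = v}. (z \<circ> prod.swap) p)
        = (\<Sum>p \<in> prod.swap ` {p \<in> Zset D V E. fst p = v}. (z \<circ> prod.swap) p)"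
      by (simp add: Z' sub2)
    also have "\<dots> = (\<Sum>p \<in> {p \<in> Zset D V E. fst p = v}. z p)"
      by (subst sum.reindex[OF inj]) simp
    finally show "(\<Sum>p \<in> {p \<in> Zset (V - D) V E. snd p = v}. (z \<circ> prod.swap) p) = s"
      using S v by simp
  qed
  ultimately show ?thesis unfolding is_dissolution_def by blast
qed

theorem lemma1:
  fixes V :: "'a set" and E :: "'a \<Rightarrow> 'a \<Rightarrow> bool" and s d :: nat
  assumes "graph V E" and "0 < s" and "0 < d"
  shows "has_dissolution s d V E \<longleftrightarrow> has_dissolution d s V E"
  using diss_swap[OF assms(1) assms(3), of s] diss_swap[OF assms(1) assms(2), of d]
  unfolding has_dissolution_def by blast

end
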